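(* Let $(\mathfrak{g},[\cdot,\cdot]_{\mathfrak{g}},\phi_{\mathfrak{g}})$ be a finite-dimensional Hom-Lie algebra with a nondegenerate symmetric invariant bilinear form $\mathfrak B$. Then $\mathfrak g$ is weakly involutive, and $(\mathfrak g,\phi_{\mathfrak g},\mathrm{ad})$ and $(\mathfrak g^*,\phi_{\mathfrak g}^*,\mathrm{ad}^\circ)$ are equivalent representations of $\mathfrak g$. Conversely, if $\mathfrak g$ is weakly involutive and $(\mathfrak g,\phi_{\mathfrak g},\mathrm{ad})$ and $(\mathfrak g^*,\phi_{\mathfrak g}^*,\mathrm{ad}^\circ)$ are equivalent representations of $\mathfrak g$, then there exists a nondegenerate invariant bilinear form on $\mathfrak g$.
   Context: A Hom-Lie algebra $(\mathfrak{g},[\cdot,\cdot]_{\mathfrak{g}},\phi_{\mathfrak{g}})$: skew-symmetric bilinear bracket and linear map with $\phi_{\mathfrak g}[x,y]=[\phi_{\mathfrak g}x,\phi_{\mathfrak g}y]$ and $[\phi_{\mathfrak g}(x),[y,z]]+[\phi_{\mathfrak g}(y),[z,x]]+[\phi_{\mathfrak g}(z),[x,y]]=0$; weakly involutive if $[\phi_{\mathfrak g}^2(x),y]_{\mathfrak g}=[x,y]_{\mathfrak g}$ for all $x,y$. A representation $(V,\beta,\rho)$: $\beta\in\mathfrak{gl}(V)$, $\rho:\mathfrak g\to\mathfrak{gl}(V)$ with $\rho(\phi_{\mathfrak g}(x))\beta=\beta\rho(x)$ and $\rho([x,y])\beta=\rho(\phi_{\mathfrak g}(x))\rho(y)-\rho(\phi_{\mathfrak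 g}(y))\rho(x)$. Adjoint: $\mathrm{ad}_xy=[x,y]_{\mathfrak g}$. $\mathrm{ad}^\circ_xa\in\mathfrak g^*$: $\langle\mathrm{ad}^\circ_xa,y\rangle=-\langle a,[\phi_{\mathfrak g}(x),y]_{\mathfrak g}\rangle$. Two representations $(V,\beta,\rho)$, $(V',\beta',\rho')$ are equivalent if there is a linear isomorphism $\varphi:V\to V'$ with $\varphi\rho(x)=\rho'(x)\varphi$ for all $x$ and $\beta'\varphi=\varphi\beta$. A bilinear form $\mathfrak B$ on $\mathfrak g$ is invariant if $\mathfrak B([x,y]_{\mathfrak g},z)=\mathfrak B(x,[\phi_{\mathfrak g}(y),z]_{\mathfrak g})$ and $\mathfrak B(\phi_{\mathfrak g}(x),y)=\mathfrak B(x,\phi_{\mathfrak g}(y))$ for all $x,y,z$. *)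

theory Defs
  imports "HOL-Analysis.Analysis"
begin

text \<open>A finite-dimensional vector space over a field 'k is modelled as 'k^'n with 'n finite.
  The dual space is identified with 'k^'n via the standard pairing.\<close>

type_synonym ('k,'n) gvec = "'k ^ 'n"

definition lin :: "('k::field ^ 'm \<Rightarrow> 'k ^ 'n) \<Rightarrow> bool" where
  "lin f \<longleftrightarrow> (\<forall>x y. f (x + y) = f x + f y) \<and> (\<forall>c x. f (c *s x) = c *s f x)"

definition bilin_br :: "('k::field ^ 'n \<Rightarrow> 'k ^ 'n \<Rightarrow> 'k ^ 'n) \<Rightarrow> bool" where
  "bilin_br br \<longleftrightarrow> (\<forall>x. lin (br x)) \<and> (\<forall>y. lin (\<lambda>x. br x y))"

definition bilin_form :: "('k::field ^ 'n \<Rightarrow> 'k ^ 'n \<Rightarrow> 'k) \<Rightarrow> bool" where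
  "bilin_form B \<longleftrightarrow>
     (\<forall>x y z. B (x + y) z = B x z + B y z) \<and> (\<forall>c x z. B (c *s x) z = c * B x z) \<and>
     (\<forall>x y z. B x (y + z) = B x y + B x z) \<and> (\<forall>c x z. B x (c *s z) = c * B x z)"

definition hom_lie :: "('k::field ^ 'n \<Rightarrow> 'k ^ 'n \<Rightarrow> 'k ^ 'n) \<Rightarrow> ('k ^ 'n \<Rightarrow> 'k ^ 'n) \<Rightarrow> bool" where
  "hom_lie br phi \<longleftrightarrow> bilin_br br \<and> (\<forall>x y. br x y = - br y x) \<and> lin phi \<and>
     (\<forall>x y. phi (br x y) = br (phi x) (phi y)) \<and>
     (\<forall>x y z. br (phi x) (br y z) + br (phi y) (br z x) + br (phi z) (br x y) = 0)"

definition weakly_involutive :: "('k::field ^ 'n \<Rightarrow> 'k ^ 'n \<Rightarrow> 'k ^ 'n) \<Rightarrow> ('k ^ 'n \<Rightarrow> 'k ^ 'n) \<Rightarrow> bool" where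
  "weakly_involutive br phi \<longleftrightarrow> (\<forall>x y. br (phi (phi x)) y = br x y)"

definition is_rep :: "('k::field ^ 'n \<Rightarrow> 'k ^ 'n \<Rightarrow> 'k ^ 'n) \<Rightarrow> ('k ^ 'n \<Rightarrow> 'k ^ 'n)
    \<Rightarrow> ('k ^ 'm \<Rightarrow> 'k ^ 'm) \<Rightarrow> ('k ^ 'n \<Rightarrow> 'k ^ 'm \<Rightarrow> 'k ^ 'm) \<Rightarrow> bool" where
  "is_rep br phi beta rho \<longleftrightarrow> lin beta \<and> (\<forall>x. lin (rho x)) \<and>
     (\<forall>x y. rho (x + y) = (\<lambda>v. rho x v + rho y v)) \<and> (\<forall>c x. rho (c *s x) = (\<lambda>v. c *s rho x v)) \<and>
     (\<forall>x v. rho (phi x) (beta v) = beta (rho x v)) \<and>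
     (\<forall>x y v. rho (br x y) (beta v) = rho (phi x) (rho y v) - rho (phi y) (rho x v))"

definition equiv_rep :: "('k::field ^ 'm \<Rightarrow> 'k ^ 'm) \<Rightarrow> ('k ^ 'n \<Rightarrow> 'k ^ 'm \<Rightarrow> 'k ^ 'm)
    \<Rightarrow> ('k ^ 'm' \<Rightarrow> 'k ^ 'm') \<Rightarrow> ('k ^ 'n \<Rightarrow> 'k ^ 'm' \<Rightarrow> 'k ^ 'm') \<Rightarrow> bool" where
  "equiv_rep beta rho beta' rho' \<longleftrightarrow>
     (\<exists>f. lin f \<and> bij f \<and> (\<forall>x v. f (rho x v) = rho' x (f v)) \<and> (\<forall>v. beta' (f v) = f (beta v)))"

definition ad :: "('k::field ^ 'n \<Rightarrow> 'k ^ 'n \<Rightarrow> 'k ^ 'n) \<Rightarrow> 'k ^ 'n \<Rightarrow> 'k ^ 'n \<Rightarrow> 'k ^ 'n" where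
  "ad br x y = br x y"

definition pair :: "'k::field ^ 'n \<Rightarrow> 'k ^ 'n \<Rightarrow> 'k" where
  "pair a x = (\<Sum>i\<in>UNIV. a $ i * x $ i)"

text \<open>Dual map: pair (dual_map f a) x = pair a (f x).\<close>
definition dual_map :: "('k::field ^ 'n \<Rightarrow> 'k ^ 'n) \<Rightarrow> 'k ^ 'n \<Rightarrow> 'k ^ 'n" where
  "dual_map f a = (\<chi> i. pair a (f (axis i 1)))"

text \<open>pair (ad_circ br phi x a) y = - pair a (br (phi x) y).\<close>
definition ad_circ :: "('k::field ^ 'n \<Rightarrow> 'k ^ 'n \<Rightarrow> 'k ^ 'n) \<Rightarrow> ('k ^ 'n \<Rightarrow> 'k ^ 'n)
    \<Rightarrow> 'k ^ 'n \<Rightarrow> 'k ^ 'n \<Rightarrow> 'k ^ 'n" where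
  "ad_circ br phi x a = (\<chi> i. - pair a (br (phi x) (axis i 1)))"

definition nondegenerate :: "('k::field ^ 'n \<Rightarrow> 'k ^ 'n \<Rightarrow> 'k) \<Rightarrow> bool" where
  "nondegenerate B \<longleftrightarrow> (\<forall>x. (\<forall>y. B x y = 0) \<longrightarrow> x = 0) \<and> (\<forall>y. (\<forall>x. B x y = 0) \<longrightarrow> y = 0)"

definition invariant_form :: "('k::field ^ 'n \<Rightarrow> 'k ^ 'n \<Rightarrow> 'k ^ 'n) \<Rightarrow> ('k ^ 'n \<Rightarrow> 'k ^ 'n)
    \<Rightarrow> ('k ^ 'n \<Rightarrow> 'k ^ 'n \<Rightarrow> 'k) \<Rightarrow> bool" where
  "invariant_form br phi B \<longleftrightarrow> (\<forall>x y z. B (br x y) z = B x (br (phi y) z)) \<and>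
     (\<forall>x y. B (phi x) y = B x (phi y))"

end

theory Submission
  imports Defs
begin

lemma neg_scale: "(-1::'k::field) *s (x::'k^'n) = - x"
  by (simp add: vec_eq_iff)

lemma lin_zero: "lin f \<Longrightarrow> f 0 = 0"
proof -
  assume "lin f"
  then have "f ((0::'a::field) *s (0::'a^'b)) = 0 *s f 0" unfolding lin_def by blast
  then show ?thesis by (simp add: vec_eq_iff)
qed

lemma lin_neg: "lin f \<Longrightarrow> f (- x) = - f x"
  unfolding lin_def by (metis neg_scale)

lemma lin_diff: "lin f \<Longrightarrow> f (x - y) = f x - f y"
  using lin_neg[of f y] unfolding lin_def by (metis diff_conv_add_uminus)

lemma lin_linear: "lin f \<Longrightarrow> Vector_Spaces.linear (*s) (*s) f"
  unfolding lin_def by unfold_locales auto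

lemma func_sum:
  assumes a: "\<forall>x y. h (x+y) = h x + h y" and s: "\<forall>c x. h (c *s x) = (c::'k::field) * h x"
  shows "finite A \<Longrightarrow> h (sum g A) = (\<Sum>i\<in>A. h (g i :: 'k^'n))"
proof (induction A rule: finite_induct)
  case empty
  from s have "h ((0::'k) *s 0) = 0 * h 0" by blast
  then show ?case by (simp add: vec_eq_iff)
next
  case (insert x F)
  then show ?case using a by simp
qed

lemma func_expand:
  assumes a: "\<forall>x y. h (x+y) = h x + h y" and s: "\<forall>c x. h (c *s x) = (c::'k::field) * h x"
  shows "h (y::'k^'n::finite) = (\<Sum>i\<in>UNIV. y$i * h (axis i 1))"
proof -
  have "h y = h (\<Sum>i\<in>UNIV. (y$i) *s axis i 1)" by (simp add: basis_expansion)
  also have "\<dots> = (\<Sum>i\<in>UNIV. h ((y$i) *s axis i 1))" by (rule func_sum[OF a s]) simp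
  also have "\<dots> = (\<Sum>i\<in>UNIV. y$i * h (axis i 1))" using s by simp
  finally show ?thesis .
qed

lemma pair_vals:
  assumes a: "\<forall>x y. h (x+y) = h x + h y" and s: "\<forall>c x. h (c *s x) = (c::'k::field) * h x"
  shows "pair (\<chi> i. h (axis i 1)) (y::'k^'n::finite) = h y"
  unfolding pair_def using func_expand[OF a s, of y] by (simp add: mult.commute)

lemma pair_add_l: "pair (a + b) x = pair a x + pair b x"
  unfolding pair_def by (simp add: distrib_right sum.distrib)
lemma pair_add_r: "pair a (x + y) = pair a x + pair a y"
  unfolding pair_def by (simp add: distrib_left sum.distrib)
lemma pair_scale_l: "pair (c *s a) x = c * pair a x"
  unfolding pair_def by (simp add: sum_distrib_left mult.assoc)
lemma pair_scale_r: "pair a (c *s x) = c * pair a x"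
  unfolding pair_def by (simp add: sum_distrib_left mult.left_commute)
lemma pair_neg_l: "pair (- a) x = - pair a x"
  unfolding pair_def by (simp add: sum_negf)
lemma pair_neg_r: "pair a (- x) = - pair a x"
  unfolding pair_def by (simp add: sum_negf)
lemma pair_diff_r: "pair a (x - y) = pair a x - pair a y"
  unfolding pair_def by (simp add: sum_subtractf right_diff_distrib)
lemma pair_axis_r: "pair a (axis i 1) = a $ i"
proof -
  have "pair a (axis i 1) = (\<Sum>j\<in>UNIV. if j = i then a $ j else 0)"
    unfolding pair_def by (intro sum.cong) (auto simp: axis_def)
  then show ?thesis by simp
qed
lemma pair_axis_l: "pair (axis i 1) a = a $ i"
proof -
  have "pair (axis i 1) a = (\<Sum>j\<in>UNIV. if j = i then a $ j else 0)"
    unfolding pair_def by (intro sum.cong) (auto simp: axis_def)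
  then show ?thesis by simp
qed

lemma pair_dual: "lin phi \<Longrightarrow> pair (dual_map phi a) x = pair a (phi x)"
proof -
  assume l: "lin phi"
  have "pair a (phi x) = pair (\<chi> i. pair a (phi (axis i 1))) x"
    by (rule pair_vals[symmetric]) (use l in \<open>auto simp: lin_def pair_add_r pair_scale_r\<close>)
  then show ?thesis by (simp add: dual_map_def)
qed

lemma pair_adc: "lin (br (phi x)) \<Longrightarrow> pair (ad_circ br phi x a) z = - pair a (br (phi x) z)"
proof -
  assume l: "lin (br (phi x))"
  have "- pair a (br (phi x) z) = pair (\<chi> i. - pair a (br (phi x) (axis i 1))) z"
    by (rule pair_vals[symmetric]) (use l in \<open>auto simp: lin_def pair_add_r pair_scale_r\<close>)
  then show ?thesis by (simp add: ad_circ_def)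
qed

lemma vec_eq_pair: "(\<And>i. pair u (axis i 1) = pair w (axis i 1)) \<Longrightarrow> u = w"
  by (simp add: pair_axis_r vec_eq_iff)


context
  fixes br :: "'k::field ^ 'n \<Rightarrow> 'k ^ 'n \<Rightarrow> 'k ^ 'n" and phi :: "'k ^ 'n \<Rightarrow> 'k ^ 'n"
  assumes H: "hom_lie br phi"
begin

lemma H_lin_r: "lin (br x)" using H unfolding hom_lie_def bilin_br_def by blast
lemma H_lin_l: "lin (\<lambda>x. br x y)" using H unfolding hom_lie_def bilin_br_def by blast
lemma H_skew: "br x y = - br y x" using H unfolding hom_lie_def by blast
lemma H_phi: "lin phi" using H unfolding hom_lie_def by blast
lemma H_mult: "phi (br x y) = br (phi x) (phi y)" using H unfolding hom_lie_def by blast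
lemma H_jac: "br (phi x) (br y z) + br (phi y) (br z x) + br (phi z) (br x y) = 0"
  using H unfolding hom_lie_def by blast

lemma H_add_l: "br (x + y) z = br x z + br y z" using H_lin_l[of z] by (simp add: lin_def)
lemma H_scale_l: "br (c *s x) z = c *s br x z" using H_lin_l[of z] by (simp add: lin_def)
lemma H_diff_r: "br x (y - z) = br x y - br x z" using H_lin_r[of x] by (simp add: lin_diff)

lemma H_key: "br (br x y) (phi v) = br (phi x) (br y v) - br (phi y) (br x v)"
proof -
  have "br (br x y) (phi v) = - br (phi v) (br x y)" by (rule H_skew)
  also have "\<dots> = br (phi x) (br y v) + br (phi y) (br v x)"
  proof -
    have "br (phi x) (br y v) + br (phi y) (br v x) = - br (phi v) (br x y)"
      by (simp only: eq_neg_iff_add_eq_0 H_jac)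
    then show ?thesis by simp
  qed
  also have "br v x = - br x v" by (rule H_skew)
  finally show ?thesis using H_lin_r[of "phi y"] by (simp add: lin_neg)
qed

lemma ad_rep: "is_rep br phi phi (ad br)"
  unfolding is_rep_def ad_def
  using H_phi H_lin_r H_key
  by (auto simp: fun_eq_iff H_add_l H_scale_l H_mult)

lemma adc_rep:
  assumes W: "weakly_involutive br phi"
  shows "is_rep br phi (dual_map phi) (ad_circ br phi)"
proof -
  have W': "br (phi (phi x)) y = br x y" for x y using W by (simp add: weakly_involutive_def)
  have W'': "br x (phi (phi y)) = br x y" for x y
  proof -
    have "br x (phi (phi y)) = - br (phi (phi y)) x" by (rule H_skew)
    also have "\<dots> = - br y x" by (simp add: W')
    also have "\<dots> = br x y" using H_skew[of y x] by simp
    finally show ?thesis .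
  qed
  have l1: "lin (dual_map phi)"
    unfolding lin_def
  proof (intro conjI allI)
    fix x y :: "'k^'n"
    show "dual_map phi (x + y) = dual_map phi x + dual_map phi y"
      unfolding dual_map_def vec_eq_iff by (simp add: pair_add_l)
  next
    fix c and x :: "'k^'n"
    show "dual_map phi (c *s x) = c *s dual_map phi x"
      unfolding dual_map_def vec_eq_iff by (simp add: pair_scale_l)
  qed
  have l2: "lin (ad_circ br phi x)" for x
    unfolding lin_def
  proof (intro conjI allI)
    fix a b :: "'k^'n"
    show "ad_circ br phi x (a + b) = ad_circ br phi x a + ad_circ br phi x b"
      unfolding ad_circ_def vec_eq_iff by (simp add: pair_add_l)
  next
    fix c and a :: "'k^'n"
    show "ad_circ br phi x (c *s a) = c *s ad_circ br phi x a"
      unfolding ad_circ_def vec_eq_iff by (simp add: pair_scale_l)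
  qed
  have l3: "ad_circ br phi (x + y) = (\<lambda>v. ad_circ br phi x v + ad_circ br phi y v)" for x y
  proof
    fix v
    have p: "phi (x + y) = phi x + phi y" using H_phi by (simp add: lin_def)
    show "ad_circ br phi (x + y) v = ad_circ br phi x v + ad_circ br phi y v"
      unfolding ad_circ_def p vec_eq_iff by (simp add: H_add_l pair_add_r)
  qed
  have l4: "ad_circ br phi (c *s x) = (\<lambda>v. c *s ad_circ br phi x v)" for c x
  proof
    fix v
    have p: "phi (c *s x) = c *s phi x" using H_phi by (simp add: lin_def)
    show "ad_circ br phi (c *s x) v = c *s ad_circ br phi x v"
      unfolding ad_circ_def p vec_eq_iff by (simp add: H_scale_l pair_scale_r)
  qed
  have l5: "ad_circ br phi (phi x) (dual_map phi v) = dual_map phi (ad_circ br phi x v)" for x v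
  proof (rule vec_eq_pair)
    fix i
    show "pair (ad_circ br phi (phi x) (dual_map phi v)) (axis i 1) =
          pair (dual_map phi (ad_circ br phi x v)) (axis i 1)"
      by (simp add: pair_adc H_lin_r pair_dual H_phi H_mult W' W'')
  qed
  have l6: "ad_circ br phi (br x y) (dual_map phi v) =
      ad_circ br phi (phi x) (ad_circ br phi y v) - ad_circ br phi (phi y) (ad_circ br phi x v)" for x y v
  proof (rule vec_eq_pair)
    fix i
    let ?e = "axis i 1 :: 'k^'n"
    have "pair (ad_circ br phi (br x y) (dual_map phi v)) ?e = - pair v (br (br x y) (phi ?e))"
      by (simp add: pair_adc H_lin_r pair_dual H_phi H_mult W' W'')
    also have "\<dots> = pair v (br (phi y) (br x ?e)) - pair v (br (phi x) (br y ?e))"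
      by (simp add: H_key pair_diff_r)
    also have "\<dots> = pair (ad_circ br phi (phi x) (ad_circ br phi y v)) ?e - pair (ad_circ br phi (phi y) (ad_circ br phi x v)) ?e"
      by (simp add: pair_adc H_lin_r W')
    also have "\<dots> = pair (ad_circ br phi (phi x) (ad_circ br phi y v) - ad_circ br phi (phi y) (ad_circ br phi x v)) ?e"
      by (simp only: pair_axis_r vector_minus_component)
    finally show "pair (ad_circ br phi (br x y) (dual_map phi v)) ?e =
      pair (ad_circ br phi (phi x) (ad_circ br phi y v) - ad_circ br phi (phi y) (ad_circ br phi x v)) ?e" .
  qed
  show ?thesis unfolding is_rep_def by (intro conjI allI l1 l2 l3 l4 l5 l6)
qed


lemma part1:
  assumes bl: "bilin_form B" and nd: "nondegenerate B" and sy: "\<forall>x y. B x y = B y x"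
    and iv: "invariant_form br phi B"
  shows "weakly_involutive br phi \<and> equiv_rep phi (ad br) (dual_map phi) (ad_circ br phi)"
proof -
  have Badd_l: "B (x + y) z = B x z + B y z" for x y z using bl unfolding bilin_form_def by blast
  have Badd_r: "B x (y + z) = B x y + B x z" for x y z using bl unfolding bilin_form_def by blast
  have Bsc_l: "B (c *s x) z = c * B x z" for c x z using bl unfolding bilin_form_def by blast
  have Bsc_r: "B x (c *s z) = c * B x z" for c x z using bl unfolding bilin_form_def by blast
  have Bneg_l: "B (- x) z = - B x z" for x z using Bsc_l[of "-1" x z] by (simp add: neg_scale)
  have Bneg_r: "B x (- z) = - B x z" for x z using Bsc_r[of x "-1" z] by (simp add: neg_scale)
  have Bdiff_l: "B (x - y) z = B x z - B y z" for x y z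
    by (simp only: diff_conv_add_uminus Badd_l Bneg_l)
  have Bdiff_r: "B z (x - y) = B z x - B z y" for x y z
    by (simp only: diff_conv_add_uminus Badd_r Bneg_r)
  have inv1: "B (br x y) z = B x (br (phi y) z)" for x y z using iv unfolding invariant_form_def by blast
  have inv2: "B (phi x) y = B x (phi y)" for x y using iv unfolding invariant_form_def by blast
  have nd1: "a = b" if "\<And>z. B a z = B b z" for a b
  proof -
    have "\<forall>z. B (a - b) z = 0" using that by (simp add: Bdiff_l)
    then have "a - b = 0" using nd unfolding nondegenerate_def by blast
    then show ?thesis by simp
  qed
  have nd2: "a = b" if "\<And>y. B y a = B y b" for a b
  proof -
    have "\<forall>y. B y (a - b) = 0" using that by (simp add: Bdiff_r)
    then have "a - b = 0" using nd unfolding nondegenerate_def by blast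
    then show ?thesis by simp
  qed
  have id1: "br z (phi x) = br (phi (phi z)) (phi x)" for z x
  proof (rule nd2)
    fix y
    have "B y (br z (phi x)) = B y (- br (phi x) z)" by (subst H_skew, rule refl)
    also have "\<dots> = - B (br y x) z" by (simp add: Bneg_r inv1)
    also have "\<dots> = B (- br y x) z" by (simp add: Bneg_l)
    also have "- br y x = br x y" using H_skew[of x y] by simp
    also have "B (br x y) z = B (br (phi y) z) x" using inv1 sy by simp
    also have "\<dots> = B y (phi (br (phi z) x))" using inv1 inv2 by simp
    also have "\<dots> = B y (br (phi (phi z)) (phi x))" by (simp add: H_mult)
    finally show "B y (br z (phi x)) = B y (br (phi (phi z)) (phi x))" .
  qed
  have pp: "phi (phi (br (phi y) z)) = br (phi y) z" for y z
  proof -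
    have "phi (phi (br (phi y) z)) = br (phi (phi (phi y))) (phi (phi z))" by (simp add: H_mult)
    also have "\<dots> = br (phi y) (phi (phi z))" using id1[of "phi y" "phi z"] by simp
    also have "\<dots> = - br (phi (phi z)) (phi y)" by (rule H_skew)
    also have "\<dots> = - br z (phi y)" using id1[of z y] by simp
    also have "\<dots> = br (phi y) z" using H_skew[of z "phi y"] by simp
    finally show ?thesis .
  qed
  have WI: "weakly_involutive br phi"
    unfolding weakly_involutive_def
  proof (intro allI nd1)
    fix x y z
    have "B (br (phi (phi x)) y) z = B x (phi (phi (br (phi y) z)))" using inv1 inv2 by simp
    also have "\<dots> = B (br x y) z" by (simp add: pp inv1)
    finally show "B (br (phi (phi x)) y) z = B (br x y) z" .
  qed
  define f where "f = (\<lambda>v. \<chi> i. B v (axis i 1))"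
  have pf: "pair (f v) y = B v y" for v y
    unfolding f_def by (rule pair_vals) (auto simp: Badd_r Bsc_r)
  have lf: "lin f" unfolding lin_def f_def by (simp add: vec_eq_iff Badd_l Bsc_l)
  have inj: "inj f"
  proof (rule injI)
    fix u v assume "f u = f v"
    then have "B u y = B v y" for y using pf by metis
    then show "u = v" by (rule nd1)
  qed
  have surj: "surj f" by (rule vec.linear_inj_imp_surj[OF lin_linear[OF lf] inj])
  have c1: "f (ad br x v) = ad_circ br phi x (f v)" for x v
  proof (rule vec_eq_pair)
    fix i
    have "B (br x v) (axis i 1) = B (- br v x) (axis i 1)" by (subst H_skew, rule refl)
    then show "pair (f (ad br x v)) (axis i 1) = pair (ad_circ br phi x (f v)) (axis i 1)"
      by (simp add: ad_def pf pair_adc H_lin_r Bneg_l inv1)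
  qed
  have c2: "dual_map phi (f v) = f (phi v)" for v
    by (rule vec_eq_pair) (simp add: pf pair_dual H_phi inv2)
  have "equiv_rep phi (ad br) (dual_map phi) (ad_circ br phi)"
    unfolding equiv_rep_def using lf inj surj c1 c2 by (intro exI[of _ f]) (simp add: bij_def)
  with WI show ?thesis by blast
qed

lemma part2:
  assumes "equiv_rep phi (ad br) (dual_map phi) (ad_circ br phi)"
  shows "\<exists>B. bilin_form B \<and> nondegenerate B \<and> invariant_form br phi B"
proof -
  obtain f where lf: "lin f" and bj: "bij f" and c1: "\<And>x v. f (ad br x v) = ad_circ br phi x (f v)"
    and c2: "\<And>v. dual_map phi (f v) = f (phi v)"
    using assms unfolding equiv_rep_def by blast
  define B where "B = (\<lambda>x y. pair (f x) y)"
  have fadd: "f (x + y) = f x + f y" for x y using lf by (simp add: lin_def)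
  have fsc: "f (c *s x) = c *s f x" for c x using lf by (simp add: lin_def)
  have "bilin_form B" unfolding bilin_form_def B_def
    by (simp add: fadd fsc pair_add_l pair_add_r pair_scale_l pair_scale_r)
  moreover have "nondegenerate B" unfolding nondegenerate_def
  proof (intro conjI allI impI)
    fix x assume a: "\<forall>y. B x y = 0"
    have "f x = 0"
    proof (rule vec_eq_pair)
      fix i
      have "pair (f x) (axis i 1) = 0" using a by (simp add: B_def)
      then show "pair (f x) (axis i 1) = pair 0 (axis i 1)" by (simp add: pair_def)
    qed
    then have "f x = f 0" using lin_zero[OF lf] by simp
    then show "x = 0" using bj by (simp add: bij_def inj_eq)
  next
    fix y assume a: "\<forall>x. B x y = 0"
    have "y $ i = 0" for i
    proof -
      obtain x where "f x = axis i 1" using bj by (metis bij_def surj_def)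
      then show ?thesis using a[rule_format, of x] by (simp add: B_def pair_axis_l)
    qed
    then show "y = 0" by (simp add: vec_eq_iff)
  qed
  moreover have "invariant_form br phi B" unfolding invariant_form_def
  proof (intro conjI allI)
    fix x y z
    have "br x y = - br y x" by (rule H_skew)
    then have "f (br x y) = - ad_circ br phi y (f x)" using c1[of y x] lin_neg[OF lf] by (simp add: ad_def)
    then show "B (br x y) z = B x (br (phi y) z)"
      by (simp add: B_def pair_neg_l pair_adc H_lin_r)
  next
    fix x y
    show "B (phi x) y = B x (phi y)" using c2[of x] by (simp add: B_def pair_dual[OF H_phi, symmetric])
  qed
  ultimately show ?thesis by blast
qed

end

theorem proposition2p15:
  fixes br :: "'k::field ^ 'n \<Rightarrow> 'k ^ 'n \<Rightarrow> 'k ^ 'n" and phi :: "'k ^ 'n \<Rightarrow> 'k ^ 'n"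
  assumes "hom_lie br phi"
  shows "(\<forall>B. bilin_form B \<and> nondegenerate B \<and> (\<forall>x y. B x y = B y x) \<and> invariant_form br phi B
            \<longrightarrow> weakly_involutive br phi \<and> is_rep br phi phi (ad br)
                \<and> is_rep br phi (dual_map phi) (ad_circ br phi)
                \<and> equiv_rep phi (ad br) (dual_map phi) (ad_circ br phi))
       \<and> (weakly_involutive br phi \<and> is_rep br phi phi (ad br)
                \<and> is_rep br phi (dual_map phi) (ad_circ br phi)
                \<and> equiv_rep phi (ad br) (dual_map phi) (ad_circ br phi)
            \<longrightarrow> (\<exists>B. bilin_form B \<and> nondegenerate B \<and> invariant_form br phi B))"
  using part1[OF assms] part2[OF assms] ad_rep[OF assms] adc_rep[OF assms] by blast

end
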